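(* Let $N$ be a positive integer and let $(\mathbf{l}^N_n)_{n\in\mathbb{N}^+}$ be a sequence of numbers in $[-1,1]$ such that for some fixed sign $\varepsilon\in\{1,-1\}$ we have $\mathbf{l}^N_n=\varepsilon(-1)^n$ for all $n\ge N$. Let $\mathbb{A}=(a_n)_{n\in\mathbb{N}^+}$ be a sequence of integers with $2\le a_1<a_2<\cdots<a_n<a_{n+1}<\cdots$. Then the Euler product $$\zeta^{\mathbf{l}^N_n}_{\mathbb{A}}(s)=\prod_{n=1}^{\infty}\frac{1}{1-\mathbf{l}^N_n a_n^{-s}}$$ has an analytic continuation to the half-plane $\Re(s)>1/2$ which has no zeros and no singularities in this half-plane.
   Context: For $a>0$, $a^{-s}=e^{-s\ln a}$. The product converges for $\Re(s)>1$, where it defines $\zeta^{\mathbf{l}^N_n}_{\mathbb{A}}$. *)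

theory Defs
  imports "HOL-Analysis.Analysis"
begin

end

theory Submission
  imports Defs "HOL-Complex_Analysis.Cauchy_Integral_Formula"
begin


lemma powr_diff_bound:
  fixes s :: complex and u v \<sigma> :: real
  assumes u1: "1 \<le> u" and uv: "u \<le> v" and sp: "0 < \<sigma>" and sr: "\<sigma> \<le> Re s"
  shows "norm (of_real u powr (-s) - of_real v powr (-s)) \<le> norm s * (u powr (-\<sigma>) - v powr (-\<sigma>)) / \<sigma>"
proof -
  define F where "F = (\<lambda>t::real. (of_real t :: complex) powr (-s))"
  define F' where "F' = (\<lambda>t::real. - s * (of_real t :: complex) powr (-s - 1))"
  define G where "G = (\<lambda>t::real. - norm s * t powr (-\<sigma>) / \<sigma>)"
  define g where "g = (\<lambda>t::real. norm s * t powr (-\<sigma> - 1))"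
  have dF: "(F has_vector_derivative F' t) (at t within {u..v})" if "t \<in> {u..v}" for t
  proof -
    have "t > 0" using that u1 by auto
    hence "(of_real t :: complex) \<notin> \<real>\<^sub>\<le>\<^sub>0" by (auto simp: complex_nonpos_Reals_iff)
    from has_field_derivative_powr[OF this, of "-s"]
    show ?thesis unfolding F_def F'_def
      by (intro has_vector_derivative_real_field) (simp add: algebra_simps)
  qed
  have dG: "(G has_vector_derivative g t) (at t within {u..v})" if "t \<in> {u..v}" for t
  proof -
    have "t > 0" using that u1 by auto
    from has_real_derivative_powr[OF this, of "-\<sigma>"]
    have "((\<lambda>t. - norm s * t powr (-\<sigma>) / \<sigma>) has_real_derivative (- norm s * (-\<sigma> * t powr (-\<sigma> - 1)) / \<sigma>)) (at t)"
      by (intro DERIV_cdivide DERIV_cmult) auto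
    hence "(G has_real_derivative g t) (at t within {u..v})"
      unfolding G_def g_def using sp by (auto intro: has_field_derivative_at_within)
    thus ?thesis by (simp add: has_real_derivative_iff_has_vector_derivative)
  qed
  have iF: "(F' has_integral (F v - F u)) {u..v}"
    by (rule fundamental_theorem_of_calculus[OF uv dF])
  have iG: "(g has_integral (G v - G u)) {u..v}"
    by (rule fundamental_theorem_of_calculus[OF uv dG])
  have bnd: "norm (F' t) \<le> g t" if "t \<in> {u..v}" for t
  proof -
    have t1: "t \<ge> 1" using that u1 by auto
    have "norm (F' t) = norm s * t powr (- Re s - 1)"
      unfolding F'_def using t1 by (simp add: norm_mult norm_powr_real_powr)
    also have "\<dots> \<le> norm s * t powr (-\<sigma> - 1)"
      using t1 sr by (intro mult_left_mono powr_mono) auto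
    finally show ?thesis by (simp add: g_def)
  qed
  have "norm (integral {u..v} F') \<le> integral {u..v} g"
    using iF iG bnd by (intro integral_norm_bound_integral) auto
  hence "norm (F v - F u) \<le> G v - G u"
    using iF iG by (simp add: integral_unique)
  thus ?thesis unfolding F_def G_def using sp
    by (simp add: norm_minus_commute field_simps)
qed



lemma two_powr_half: "(2::real) powr (-(1/2)) \<le> 3/4"
proof -
  have s: "(4/3::real) \<le> sqrt 2" by (rule real_le_rsqrt) (simp add: power2_eq_square)
  have "(2::real) powr (-(1/2)) = inverse (sqrt 2)"
    by (subst powr_minus) (subst powr_half_sqrt, auto)
  also have "\<dots> = 1 / sqrt 2" by (simp add: divide_inverse)
  also have "\<dots> \<le> 1 / (4/3)" using s by (intro divide_left_mono) auto
  finally show ?thesis by simp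
qed

lemma Ln_rem_bound:
  fixes x :: complex
  assumes "norm x \<le> 3/4"
  shows "norm (- Ln (1 - x) - x) \<le> 4 * norm x ^ 2"
proof -
  have "norm (ln (1 + (-x)) - (-x)) \<le> norm (-x)^2 / (1 - norm (-x))"
    by (rule Ln_approx_linear) (use assms in auto)
  also have "\<dots> = norm x ^ 2 / (1 - norm x)" by simp
  also have "\<dots> \<le> norm x ^ 2 / (1/4)"
    using assms by (intro divide_left_mono) auto
  also have "\<dots> = 4 * norm x ^ 2" by simp
  finally show ?thesis by (simp add: norm_minus_commute algebra_simps)
qed

lemma summable_powr_ge:
  fixes h :: "nat \<Rightarrow> real"
  assumes "\<And>n. real n + 1 \<le> h n" and "p > 1"
  shows "summable (\<lambda>n. h n powr (-p))"
proof -
  have "summable (\<lambda>n. real n powr (-p))" using assms(2) by (simp add: summable_real_powr_iff)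
  hence "summable (\<lambda>n. real (Suc n) powr (-p))" by (subst summable_Suc_iff)
  moreover have "norm (h n powr (-p)) \<le> real (Suc n) powr (-p)" for n
    using assms(1)[of n] assms(2) by (auto intro!: powr_mono2')
  ultimately show ?thesis by (rule summable_comparison_test'[where N=0])
qed

lemma norm_x_bound:
  fixes s :: complex and c b \<sigma> :: real
  assumes "\<bar>c\<bar> \<le> 1" "1 \<le> b" "\<sigma> \<le> Re s"
  shows "norm (of_real c * of_real b powr (-s)) \<le> b powr (-\<sigma>)"
proof -
  have "norm (of_real c * of_real b powr (-s)) = \<bar>c\<bar> * b powr (- Re s)"
    using assms by (simp add: norm_mult norm_powr_real_powr)
  also have "\<dots> \<le> 1 * b powr (-\<sigma>)"
    using assms by (intro mult_mono powr_mono) auto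
  finally show ?thesis by simp
qed



lemma notnonpos_of_Re: "Re (z::complex) > 0 \<Longrightarrow> z \<notin> \<real>\<^sub>\<le>\<^sub>0"
  by (auto simp: complex_nonpos_Reals_iff)

theorem proposition2p1:
  fixes N :: nat and l :: "nat \<Rightarrow> real" and a :: "nat \<Rightarrow> int" and \<epsilon> :: real
  assumes "N \<ge> 1"
    and "\<forall>n\<ge>1. -1 \<le> l n \<and> l n \<le> 1"
    and "\<epsilon> \<in> {1, -1}"
    and "\<forall>n\<ge>N. l n = \<epsilon> * (-1) ^ n"
    and "2 \<le> a 1"
    and "\<forall>n\<ge>1. a n < a (Suc n)"
  shows "\<exists>f :: complex \<Rightarrow> complex.
           f holomorphic_on {s. Re s > 1/2}
         \<and> (\<forall>s. Re s > 1/2 \<longrightarrow> f s \<noteq> 0)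
         \<and> (\<forall>s. Re s > 1 \<longrightarrow>
              (\<lambda>n. 1 / (1 - complex_of_real (l (Suc n)) * of_int (a (Suc n)) powr (- s))) has_prod f s)"
proof -
  define b where "b n = real_of_int (a (Suc n))" for n
  define c where "c n = l (Suc n)" for n
  define x where "x s n = complex_of_real (c n) * complex_of_real (b n) powr (-s)" for s n
  define y where "y s n = - Ln (1 - x s n)" for s n
  define P where "P s k = y s (2*k) + y s (2*k+1)" for s k
  define G where "G s = (\<Sum>k. P s k)" for s
  define S where "S = {s. Re s > 1/2}"
  have aN: "a (Suc n) \<ge> int n + 2" for n
  proof (induction n)
    case 0 thus ?case using assms(5) by simp
  next
    case (Suc n) thus ?case using assms(6)[rule_format, of "Suc n"] by simp
  qed
  have bge: "b n \<ge> real n + 2" for n using aN[of n] unfolding b_def by linarith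
  have b1: "b n \<ge> 1" for n using bge[of n] by simp
  have bmono: "b n \<le> b (Suc n)" for n
    using assms(6)[rule_format, of "Suc n"] unfolding b_def by simp
  have c1: "\<bar>c n\<bar> \<le> 1" for n using assms(2)[rule_format, of "Suc n"] unfolding c_def by auto
  have eps: "\<bar>\<epsilon>\<bar> = 1" using assms(3) by auto
  have cN: "c (2*k) = -\<epsilon> \<and> c (2*k+1) = \<epsilon>" if "k \<ge> N" for k
    using assms(4)[rule_format, of "Suc (2*k)"] assms(4)[rule_format, of "Suc (2*k+1)"] that
    unfolding c_def by auto
  have xb: "norm (x s n) \<le> b n powr (-\<sigma>)" if "\<sigma> \<le> Re s" for s n \<sigma>
    unfolding x_def by (rule norm_x_bound[OF c1 b1 that])
  have x34: "norm (x s n) \<le> 3/4" if "1/2 \<le> Re s" for s n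
  proof -
    have "norm (x s n) \<le> b n powr (-(1/2))" using xb that by simp
    also have "\<dots> \<le> 2 powr (-(1/2))" using bge[of n] by (intro powr_mono2') auto
    also have "\<dots> \<le> 3/4" by (rule two_powr_half)
    finally show ?thesis .
  qed
  have Re1x: "Re (1 - x s n) > 0" if "1/2 \<le> Re s" for s n
  proof -
    have "Re (x s n) \<le> norm (x s n)" by (rule complex_Re_le_cmod)
    thus ?thesis using x34[OF that, of n] by simp
  qed
  have yx: "norm (y s n - x s n) \<le> 4 * b n powr (-(2*\<sigma>))" if "1/2 \<le> Re s" "\<sigma> \<le> Re s" for s n \<sigma>
  proof -
    have "norm (y s n - x s n) \<le> 4 * norm (x s n) ^ 2"
      unfolding y_def by (rule Ln_rem_bound[OF x34[OF that(1)]])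
    also have "\<dots> \<le> 4 * (b n powr (-\<sigma>)) ^ 2"
      using xb[OF that(2)] by (intro mult_left_mono power_mono) auto
    also have "(b n powr (-\<sigma>)) ^ 2 = b n powr (-(2*\<sigma>))"
      by (simp add: power2_eq_square powr_add[symmetric])
    finally show ?thesis .
  qed
  have holy: "(\<lambda>s. y s n) holomorphic_on S" for n
    unfolding y_def x_def S_def
    by (intro holomorphic_intros notnonpos_of_Re Re1x[unfolded x_def]) auto
  have Pbound: "norm (P s k) \<le> R * (b (2*k) powr (-\<sigma>) - b (2*k+1) powr (-\<sigma>)) / \<sigma>
                   + 4 * (b (2*k) powr (-(2*\<sigma>)) + b (2*k+1) powr (-(2*\<sigma>)))"
    if "k \<ge> N" "0 < \<sigma>" "1/2 \<le> Re s" "\<sigma> \<le> Re s" "norm s \<le> R" for s k \<sigma> R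
  proof -
    have xx: "x s (2*k) + x s (2*k+1) = - of_real \<epsilon> * (of_real (b (2*k)) powr (-s) - of_real (b (2*k+1)) powr (-s))"
      using cN[OF that(1)] unfolding x_def by (simp add: algebra_simps)
    have dnn: "0 \<le> b (2*k) powr (-\<sigma>) - b (2*k+1) powr (-\<sigma>)"
      using bmono[of "2*k"] b1[of "2*k"] that(2) by (simp add: powr_mono2')
    have "norm (x s (2*k) + x s (2*k+1)) = norm (of_real (b (2*k)) powr (-s) - of_real (b (2*k+1)) powr (-s))"
      unfolding xx using eps by (simp add: norm_mult)
    also have "\<dots> \<le> norm s * (b (2*k) powr (-\<sigma>) - b (2*k+1) powr (-\<sigma>)) / \<sigma>"
      using bmono[of "2*k"] by (intro powr_diff_bound[OF b1 _ that(2) that(4)]) simp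
    also have "\<dots> \<le> R * (b (2*k) powr (-\<sigma>) - b (2*k+1) powr (-\<sigma>)) / \<sigma>"
      using that(2,5) dnn by (intro divide_right_mono mult_right_mono) auto
    finally have h1: "norm (x s (2*k) + x s (2*k+1)) \<le> R * (b (2*k) powr (-\<sigma>) - b (2*k+1) powr (-\<sigma>)) / \<sigma>" .
    have "P s k = (x s (2*k) + x s (2*k+1)) + (y s (2*k) - x s (2*k)) + (y s (2*k+1) - x s (2*k+1))"
      unfolding P_def by simp
    hence "norm (P s k) \<le> norm (x s (2*k) + x s (2*k+1)) + norm (y s (2*k) - x s (2*k)) + norm (y s (2*k+1) - x s (2*k+1))"
      by (metis norm_triangle_ineq order.trans add_right_mono)
    thus ?thesis using h1 yx[OF that(3,4), of "2*k"] yx[OF that(3,4), of "2*k+1"] by simp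
  qed
  have Dsum: "summable (\<lambda>k. b (2*k) powr (-\<sigma>) - b (2*k+1) powr (-\<sigma>))" if "0 < \<sigma>" for \<sigma>
  proof -
    have "real k \<le> b (2*k)" for k using bge[of "2*k"] by simp
    hence "filterlim (\<lambda>k. b (2*k)) at_top sequentially"
      by (intro filterlim_at_top_mono[OF filterlim_real_sequentially] always_eventually allI)
    hence lim: "(\<lambda>k. b (2*k) powr (-\<sigma>)) \<longlonglongrightarrow> 0"
      by (rule tendsto_neg_powr[rotated]) (use that in simp)
    have "summable (\<lambda>k. b (2*k) powr (-\<sigma>) - b (2*Suc k) powr (-\<sigma>))"
      using telescope_summable'[OF lim] by simp
    moreover have "norm (b (2*k) powr (-\<sigma>) - b (2*k+1) powr (-\<sigma>)) \<le> b (2*k) powr (-\<sigma>) - b (2*Suc k) powr (-\<sigma>)" for k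
    proof -
      have "b (2*k+1) powr (-\<sigma>) \<le> b (2*k) powr (-\<sigma>)"
        using bmono[of "2*k"] b1[of "2*k"] that by (intro powr_mono2') auto
      moreover have "b (2*Suc k) powr (-\<sigma>) \<le> b (2*k+1) powr (-\<sigma>)"
        using bmono[of "2*k+1"] b1[of "2*k+1"] that by (intro powr_mono2') auto
      ultimately show ?thesis by simp
    qed
    ultimately show ?thesis by (rule summable_comparison_test'[where N=0]) 
  qed
  have bk: "real k + 1 \<le> b (2*k)" "real k + 1 \<le> b (2*k+1)" "real k + 1 \<le> b k" for k
    using bge[of "2*k"] bge[of "2*k+1"] bge[of k] by simp_all
  have Esum0: "summable (\<lambda>k. b (2*k) powr (-p))" if "p > 1" for p
    by (rule summable_powr_ge[OF bk(1) that])
  have Esum1: "summable (\<lambda>k. b (2*k+1) powr (-p))" if "p > 1" for p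
    by (rule summable_powr_ge[OF bk(2) that])
  have Esum: "summable (\<lambda>k. b k powr (-p))" if "p > 1" for p
    by (rule summable_powr_ge[OF bk(3) that])
  have hol: "G holomorphic_on S"
  proof (rule holomorphic_uniform_sequence[where f="\<lambda>n s. \<Sum>i<n. P s i"])
    show "open S" unfolding S_def by (rule open_halfspace_Re_gt)
    show "(\<lambda>s. \<Sum>i<n. P s i) holomorphic_on S" for n
      unfolding P_def by (intro holomorphic_intros holy)
    fix z assume "z \<in> S"
    define d where "d = (Re z - 1/2)/2"
    define \<sigma> where "\<sigma> = 1/2 + d"
    define R where "R = norm z + d"
    have d0: "d > 0" using \<open>z \<in> S\<close> unfolding S_def d_def by simp
    have inball: "\<sigma> \<le> Re s \<and> norm s \<le> R" if "s \<in> cball z d" for s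
    proof -
      have "dist z s \<le> d" using that by simp
      hence "norm (z - s) \<le> d" by (simp add: dist_norm)
      moreover have "\<bar>Re (z - s)\<bar> \<le> norm (z - s)" by (rule abs_Re_le_cmod)
      moreover have "norm s \<le> norm z + norm (z - s)" using norm_triangle_sub[of s z] by (simp add: norm_minus_commute)
      ultimately have "Re z - Re s \<le> d" "norm s \<le> R" unfolding R_def by (auto simp: abs_le_iff)
      moreover from this(1) have "\<sigma> \<le> Re s" unfolding \<sigma>_def using d_def by argo
      ultimately show ?thesis by auto
    qed
    have sub: "cball z d \<subseteq> S"
    proof
      fix s assume "s \<in> cball z d"
      hence "\<sigma> \<le> Re s" using inball by blast
      thus "s \<in> S" using d0 unfolding S_def \<sigma>_def by simp
    qed
    define M where "M k = R * (b (2*k) powr (-\<sigma>) - b (2*k+1) powr (-\<sigma>)) / \<sigma>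
                   + 4 * (b (2*k) powr (-(2*\<sigma>)) + b (2*k+1) powr (-(2*\<sigma>)))" for k
    have s1: "summable (\<lambda>k. R * (b (2*k) powr (-\<sigma>) - b (2*k+1) powr (-\<sigma>)) / \<sigma>)"
      by (rule summable_divide[OF summable_mult[OF Dsum]]) (use d0 in \<open>simp add: \<sigma>_def\<close>)
    have s2: "summable (\<lambda>k. 4 * (b (2*k) powr (-(2*\<sigma>)) + b (2*k+1) powr (-(2*\<sigma>))))"
      by (rule summable_mult[OF summable_add[OF Esum0 Esum1]]) (use d0 in \<open>simp_all add: \<sigma>_def\<close>)
    have sM: "summable M" unfolding M_def by (rule summable_add[OF s1 s2])
    have ev: "eventually (\<lambda>k. \<forall>s\<in>cball z d. norm (P s k) \<le> M k) sequentially"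
    proof (rule eventually_sequentiallyI[of N])
      fix k assume "N \<le> k"
      show "\<forall>s\<in>cball z d. norm (P s k) \<le> M k"
      proof
        fix s assume "s \<in> cball z d"
        with inball have "\<sigma> \<le> Re s" "norm s \<le> R" by auto
        thus "norm (P s k) \<le> M k" unfolding M_def using d0 \<open>N \<le> k\<close>
          by (intro Pbound) (auto simp: \<sigma>_def)
      qed
    qed
    have "uniform_limit (cball z d) (\<lambda>n s. \<Sum>i<n. P s i) (\<lambda>s. \<Sum>i. P s i) sequentially"
      by (rule Weierstrass_m_test_ev[where f="\<lambda>i s. P s i", OF ev sM])
    moreover have "G = (\<lambda>s. \<Sum>i. P s i)" by (simp add: G_def fun_eq_iff)
    ultimately show "\<exists>d>0. cball z d \<subseteq> S \<and> uniform_limit (cball z d) (\<lambda>n s. \<Sum>i<n. P s i) G sequentially"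
      using d0 sub by auto
  qed
  have prod: "(\<lambda>n. 1 / (1 - complex_of_real (l (Suc n)) * of_int (a (Suc n)) powr (- s))) has_prod exp (G s)"
    if "Re s > 1" for s
  proof -
    have "summable (\<lambda>n. b n powr (-Re s) + 4 * b n powr (-(2*Re s)))"
      using that by (intro summable_add summable_mult Esum) auto
    moreover have "norm (norm (y s n)) \<le> b n powr (-Re s) + 4 * b n powr (-(2*Re s))" for n
    proof -
      have "norm (y s n) \<le> norm (x s n) + norm (y s n - x s n)" using norm_triangle_sub[of "y s n" "x s n"] by simp
      thus ?thesis using xb[of "Re s" s n] yx[of s "Re s" n] that by simp
    qed
    ultimately have "summable (\<lambda>n. norm (y s n))" by (rule summable_comparison_test'[where N=0])
    hence ys: "y s sums (suminf (y s))" by (rule summable_sums[OF summable_norm_cancel])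
    from sums_group[OF ys, of 2] have "(\<lambda>n. y s (Suc (n * 2)) + y s (n * 2)) sums suminf (y s)"
      by (simp add: atLeastLessThanSuc)
    moreover have "P s = (\<lambda>n. y s (Suc (n * 2)) + y s (n * 2))"
      by (simp add: fun_eq_iff P_def mult.commute add.commute)
    ultimately have "P s sums (suminf (y s))" by simp
    hence "G s = suminf (y s)" unfolding G_def by (simp add: sums_iff)
    with sums_imp_has_prod_exp[OF ys] have "(\<lambda>n. exp (y s n)) has_prod exp (G s)"
      by (simp add: has_prod_def)
    moreover have "exp (y s n) = 1 / (1 - complex_of_real (l (Suc n)) * of_int (a (Suc n)) powr (- s))" for n
    proof -
      have "1 - x s n \<noteq> 0" using Re1x[of s n] that by auto
      hence "exp (y s n) = 1 / (1 - x s n)" unfolding y_def by (simp add: exp_minus divide_inverse)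
      thus ?thesis by (simp add: x_def b_def c_def)
    qed
    ultimately show ?thesis by simp
  qed
  show ?thesis
    by (rule exI[of _ "\<lambda>s. exp (G s)"]) (use hol prod in \<open>auto simp: S_def intro!: holomorphic_intros\<close>)
qed


end
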